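(* Work on $\mathbb{C}^3$ with coordinates $X=(z,w^{\dot 1},w^{\dot 2})$, and let the "defect" be the complex line $\{w^{\dot 1}=w^{\dot 2}=0\}$, whose points are written $Y=(z_Y,0,0)$. For $X$ a bulk point and $Y$ a defect point, define the $(0,2)$-form $$\bar\omega_{XY}=(\bar z-\bar z_{Y})\,[d\bar w\wedge d\bar w]-2\,d(\bar z-\bar z_{Y})\wedge[\bar w\, d\bar w],$$ and the bulk-to-defect propagator $$\mathcal{K}(X,Y)=-\frac{\bar\omega_{XY}}{\pi^3\big(|z-z_Y|^2+|w^{\dot 1}|^2+|w^{\dot 2}|^2\big)^3}.$$ Then for any two defect points $Y_1=(z_1,0,0)$ and $Y_2=(z_2,0,0)$ (with $z_1,z_2$ treated either as fixed or as additional complex variables), the wedge product satisfies $$\mathcal{K}(X,Y_1)\wedge\mathcal{K}(X,Y_2)=0$$ wherever it is defined. Consequently, any bulk/defect Feynman diagram whose integrand contains two bulk-to-defect propagators attached to the same bulk vertex $X$ and ending on the defect (i.e. forming a triangle with the defect) vanishes.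
   Context: Spinor brackets: for two-component objects $a^{\dot\alpha},b^{\dot\alpha}$, $[a\,b]=a^{\dot\alpha}b_{\dot\alpha}$ with indices lowered by $w_{\dot\alpha}=w^{\dot\beta}\epsilon_{\dot\beta\dot\alpha}$, where $\epsilon$ is antisymmetric with $\epsilon^{\dot 1\dot 2}=1$; thus $[d\bar w\wedge d\bar w]$ is a nonzero multiple of $d\bar w^{\dot 1}\wedge d\bar w^{\dot 2}$ and $[\bar w\,d\bar w]$ is a multiple of $\bar w^{\dot 1}d\bar w^{\dot 2}-\bar w^{\dot 2}d\bar w^{\dot 1}$. The propagator $\mathcal{K}$ is the limit of the regularized propagator of the $(0,1)$-form gauge field of holomorphic Chern–Simons/BF type theories on twistor space in the gauge $\bar\partial^\dagger\mathsf{A}=0$, with one endpoint placed on the defect; diagrams are integrals of wedge products of such propagators, vertices and external fields over bulk and defect points. *)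

theory Defs
  imports Complex_Main
begin

text \<open>Pointwise model of the antiholomorphic exterior algebra.  A form (at a fixed point)
is given by its coefficients: the coefficient of index set S (a finite set of generator
indices, taken in increasing order) is the coefficient of the basis monomial
d\<bar>x_{i1} wedge ... wedge d\<bar>x_{ik} with i1 < ... < ik.
Generators: 0 = d(conj z), 1 = d(conj w^1), 2 = d(conj w^2),
3 = d(conj z_1), 4 = d(conj z_2)  (the latter two used when z_1, z_2 are variables).\<close>

type_synonym form = "nat set \<Rightarrow> complex"

definition zero_form :: form where
  "zero_form = (\<lambda>S. 0)"

definition fadd :: "form \<Rightarrow> form \<Rightarrow> form" where
  "fadd a b = (\<lambda>S. a S + b S)"

definition fscale :: "complex \<Rightarrow> form \<Rightarrow> form" where
  "fscale c a = (\<lambda>S. c * a S)"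

definition scalar :: "complex \<Rightarrow> form" where
  "scalar c = (\<lambda>S. if S = {} then c else 0)"

definition gen :: "nat \<Rightarrow> form" where
  "gen i = (\<lambda>S. if S = {i} then 1 else 0)"

definition shuffle_sign :: "nat set \<Rightarrow> nat set \<Rightarrow> complex" where
  "shuffle_sign A B = (-1) ^ card {(i, j). i \<in> A \<and> j \<in> B \<and> j < i}"

definition wedge :: "form \<Rightarrow> form \<Rightarrow> form" where
  "wedge a b = (\<lambda>S. \<Sum>A\<in>Pow S. shuffle_sign A (S - A) * a A * b (S - A))"

text \<open>Two-component spinors (dotted index) with form-valued components.\<close>
type_synonym spinor = "form \<times> form"

definition eps :: "nat \<Rightarrow> nat \<Rightarrow> complex" where
  "eps a b = (if a = 1 \<and> b = 2 then 1 else if a = 2 \<and> b = 1 then -1 else 0)"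

definition comp :: "spinor \<Rightarrow> nat \<Rightarrow> form" where
  "comp s a = (if a = 1 then fst s else snd s)"

text \<open>lowered component w_a = w^b eps_{b a}\<close>
definition lower :: "spinor \<Rightarrow> nat \<Rightarrow> form" where
  "lower s a = fadd (fscale (eps 1 a) (comp s 1)) (fscale (eps 2 a) (comp s 2))"

text \<open>[a b] = a^a wedge b_a\<close>
definition bracket :: "spinor \<Rightarrow> spinor \<Rightarrow> form" where
  "bracket a b = fadd (wedge (comp a 1) (lower b 1)) (wedge (comp a 2) (lower b 2))"

definition dwbar :: spinor where
  "dwbar = (gen 1, gen 2)"

definition wbar :: "complex \<Rightarrow> complex \<Rightarrow> spinor" where
  "wbar w1 w2 = (scalar (cnj w1), scalar (cnj w2))"

text \<open>omega_{XY} at X = (z,w1,w2), Y = (zY,0,0); dzYbar is the 1-form d(conj zY)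
(zero_form if zY is fixed, a generator if zY is a variable).\<close>
definition omega :: "complex \<Rightarrow> complex \<Rightarrow> complex \<Rightarrow> complex \<Rightarrow> form \<Rightarrow> form" where
  "omega z w1 w2 zY dzYbar =
     fadd (fscale (cnj z - cnj zY) (bracket dwbar dwbar))
          (fscale (-2) (wedge (fadd (gen 0) (fscale (-1) dzYbar)) (bracket (wbar w1 w2) dwbar)))"

definition prop_K :: "complex \<Rightarrow> complex \<Rightarrow> complex \<Rightarrow> complex \<Rightarrow> form \<Rightarrow> form" where
  "prop_K z w1 w2 zY dzYbar =
     fscale (- 1 / complex_of_real (pi ^ 3 * ((cmod (z - zY))\<^sup>2 + (cmod w1)\<^sup>2 + (cmod w2)\<^sup>2) ^ 3))
            (omega z w1 w2 zY dzYbar)"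

end

theory Submission imports Defs "HOL-Library.Nat_Bijection" begin
definition basis :: "nat set \<Rightarrow> form" where "basis P = (\<lambda>S. if S = P then 1 else 0)"

lemma wedge_basis:
  assumes "finite P" "finite Q"
  shows "wedge (basis P) (basis Q) = (if P \<inter> Q = {} then fscale (shuffle_sign P Q) (basis (P \<union> Q)) else zero_form)"
proof (rule ext)
  fix S
  show "wedge (basis P) (basis Q) S = (if P \<inter> Q = {} then fscale (shuffle_sign P Q) (basis (P \<union> Q)) else zero_form) S"
  proof (cases "finite S")
    case False
    then have "infinite (Pow S)" by simp
    moreover have "S \<noteq> P \<union> Q" using False assms by auto
    ultimately show ?thesis unfolding wedge_def by (simp add: fscale_def basis_def zero_form_def)
  next
    case True
    have "wedge (basis P) (basis Q) S = (\<Sum>A\<in>Pow S. if A = P then shuffle_sign A (S - A) * basis Q (S - A) else 0)"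
      unfolding wedge_def by (rule sum.cong) (auto simp: basis_def)
    also have "\<dots> = (if P \<subseteq> S then shuffle_sign P (S - P) * basis Q (S - P) else 0)"
      using True by (simp add: sum.delta')
    also have "\<dots> = (if P \<inter> Q = {} then fscale (shuffle_sign P Q) (basis (P \<union> Q)) else zero_form) S"
      by (auto simp: basis_def fscale_def zero_form_def)
    finally show ?thesis .
  qed
qed

lemma wedge_zero[simp]: "wedge zero_form a = zero_form" "wedge a zero_form = zero_form"
  by (auto simp: wedge_def zero_form_def)
lemma wedge_add: "wedge (fadd a b) c = fadd (wedge a c) (wedge b c)" "wedge c (fadd a b) = fadd (wedge c a) (wedge c b)"
  by (auto simp: wedge_def fadd_def algebra_simps sum.distrib)
lemma wedge_scale: "wedge (fscale k a) c = fscale k (wedge a c)" "wedge c (fscale k a) = fscale k (wedge c a)"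
  by (auto simp: wedge_def fscale_def algebra_simps sum_distrib_left)
lemma gen_basis: "gen i = basis {i}" by (simp add: gen_def basis_def)
lemma scalar_basis: "scalar c = fscale c (basis {})" by (auto simp: scalar_def basis_def fscale_def)
lemma ss: "shuffle_sign A B = (-1) ^ card (Set.filter (\<lambda>(i,j). j < i) (A \<times> B))"
  unfolding shuffle_sign_def by (rule arg_cong[where f="\<lambda>x. (-1)^card x"]) auto

lemma sf1: "Set.filter P {} = {}" by auto
lemma sf2: "Set.filter P (insert x A) = (if P x then insert x (Set.filter P A) else Set.filter P A)" by auto
lemma test: "shuffle_sign {0,1} {2,4::nat} = 1" "shuffle_sign {2,3} {0,1::nat} = 1"
  by (simp_all add: ss sf1 sf2 del: Set.filter_eq)
lemma basis_enc: "finite P \<Longrightarrow> basis P = (\<lambda>S. if finite S \<and> set_encode S = set_encode P then 1 else 0)"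
  by (auto simp: basis_def set_encode_eq)

lemma omega3:
  "omega z w1 w2 zY (gen k) = fadd (fscale (-2*(cnj z - cnj zY)) (basis {1,2}))
     (fadd (fscale (-2*cnj w2) (basis {0,1})) (fadd (fscale (2*cnj w1) (basis {0,2}))
     (fadd (fscale (-2*cnj w2) (basis {1,k})) (fscale (2*cnj w1) (basis {2,k})))))" if "k > 2"
  using that
  unfolding omega_def bracket_def lower_def comp_def dwbar_def wbar_def
  apply (simp add: wedge_add wedge_scale gen_basis scalar_basis wedge_basis eps_def ss sf1 sf2 del: Set.filter_eq)
  apply (rule ext)
  apply (simp add: fadd_def fscale_def basis_def zero_form_def insert_commute)
  done


lemma omegaz:
  "omega z w1 w2 zY zero_form = fadd (fscale (-2*(cnj z - cnj zY)) (basis {1,2}))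
     (fadd (fscale (-2*cnj w2) (basis {0,1})) (fscale (2*cnj w1) (basis {0,2})))"
  unfolding omega_def bracket_def lower_def comp_def dwbar_def wbar_def
  apply (simp add: wedge_add wedge_scale gen_basis scalar_basis wedge_basis eps_def ss sf1 sf2 del: Set.filter_eq)
  apply (rule ext)
  apply (simp add: fadd_def fscale_def basis_def zero_form_def insert_commute)
  done

lemma omega34: "wedge (omega z w1 w2 z1 (gen 3)) (omega z w1 w2 z2 (gen 4)) = zero_form"
  apply (simp add: omega3 wedge_add wedge_scale wedge_basis ss sf1 sf2 del: Set.filter_eq)
  apply (simp add: basis_enc)
  apply (rule ext)
  apply (case_tac "finite x")
  apply (simp_all add: fadd_def fscale_def zero_form_def)
  done


lemma omegazz: "wedge (omega z w1 w2 z1 zero_form) (omega z w1 w2 z2 zero_form) = zero_form"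
  apply (simp add: omegaz wedge_add wedge_scale wedge_basis ss sf1 sf2 del: Set.filter_eq)
  apply (simp add: fadd_def fscale_def zero_form_def)
  done

theorem lemma1:
  fixes z w1 w2 z1 z2 :: complex
  assumes "(z, w1, w2) \<noteq> (z1, 0, 0)" and "(z, w1, w2) \<noteq> (z2, 0, 0)"
  shows "wedge (prop_K z w1 w2 z1 (gen 3)) (prop_K z w1 w2 z2 (gen 4)) = zero_form
       \<and> wedge (prop_K z w1 w2 z1 zero_form) (prop_K z w1 w2 z2 zero_form) = zero_form"
  unfolding prop_K_def by (simp add: wedge_scale omega34 omegazz) (simp add: fscale_def zero_form_def)

end
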